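(* $\mathfrak{L}(V)=\mathfrak{L}^-(V)$ if and only if $p_{ii}^2=1$ for all $i$ and $p_{ij}=p_{ji}=1$ for all $1\le i\neq j\le n$. In this case $\mathfrak{L}(V)=\mathfrak{L}^-(V)=V$.
   Context: $V$ is a braided vector space of diagonal type over an algebraically closed field $F$ of characteristic $0$ with basis $x_1,\dots,x_n$, braiding $C(x_i\otimes x_j)=q_{ij}x_j\otimes x_i$, Nichols algebra $\mathfrak{B}(V)$ ($\mathbb{Z}^n$-graded, $\deg x_i=e_i$); $\chi(e_i,e_j)=q_{ij}$, $p_{ij}:=q_{ij}$, $p_{uv}:=\chi(\deg u,\deg v)$. For homogeneous $x,y$, $[x,y]:=yx-p_{yx}xy$; $\mathfrak{L}(V)$ is the linear span in $\mathfrak{B}(V)$ of all iterated brackets $[\,,\,]$ (any bracketing) of $x_1,\dots,x_n$. The Nichols Lie algebra $\mathfrak{L}^-(V)$ is the Lie subalgebra of $\mathfrak{B}(V)$ generated by $V$ under the commutator $[a,b]^-=ab-ba$ (i.e. the span of all iterated commutators of $x_1,\dots,x_n$). *)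

theory Defs
  imports "HOL-Combinatorics.Permutations" "HOL-Computational_Algebra.Polynomial"
begin

text \<open>Elements of the tensor algebra T(V), V with basis x_0,...,x_(n-1), are
coefficient functions on words (lists of indices).\<close>
type_synonym 'a tens = "nat list \<Rightarrow> 'a"

definition tzero :: "'a::comm_ring_1 tens" where
  "tzero = (\<lambda>w. 0)"

definition tadd :: "'a::comm_ring_1 tens \<Rightarrow> 'a tens \<Rightarrow> 'a tens" where
  "tadd f g = (\<lambda>w. f w + g w)"

definition tsmul :: "'a::comm_ring_1 \<Rightarrow> 'a tens \<Rightarrow> 'a tens" where
  "tsmul c f = (\<lambda>w. c * f w)"

definition tmul :: "'a::comm_ring_1 tens \<Rightarrow> 'a tens \<Rightarrow> 'a tens" where
  "tmul f g = (\<lambda>w. \<Sum>k\<le>length w. f (take k w) * g (drop k w))"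

definition gen :: "nat \<Rightarrow> 'a::comm_ring_1 tens" where
  "gen i = (\<lambda>w. if w = [i] then 1 else 0)"

text \<open>Quantum symmetrizer Omega of the diagonal braiding c(x_i x_j) = q i j x_j x_i,
  summed over all degrees; the Nichols algebra is T(V) / ker Omega, so the
  image of u in B(V) is identified with symm q u.  In the word u, the letter at
  position a is moved to position sigma a; each inversion of letters i (left) and
  j (right) contributes q i j.\<close>
definition symm :: "(nat \<Rightarrow> nat \<Rightarrow> 'a::comm_ring_1) \<Rightarrow> 'a tens \<Rightarrow> 'a tens" where
  "symm q f = (\<lambda>w. \<Sum>\<sigma> \<in> {\<sigma>. \<sigma> permutes {..<length w}}.
      (\<Prod>(a,b) \<in> {(a,b). a < b \<and> b < length w \<and> \<sigma> b < \<sigma> a}. q (w ! \<sigma> a) (w ! \<sigma> b))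
      * f (map (\<lambda>a. w ! \<sigma> a) [0..<length w]))"

datatype btree = Leaf nat | Node btree btree

fun leaves :: "btree \<Rightarrow> nat list" where
  "leaves (Leaf i) = [i]"
| "leaves (Node s t) = leaves s @ leaves t"

definition chi :: "(nat \<Rightarrow> nat \<Rightarrow> 'a::comm_ring_1) \<Rightarrow> btree \<Rightarrow> btree \<Rightarrow> 'a" where
  "chi q s t = prod_list [q a b. a \<leftarrow> leaves s, b \<leftarrow> leaves t]"

fun brack :: "(nat \<Rightarrow> nat \<Rightarrow> 'a::comm_ring_1) \<Rightarrow> btree \<Rightarrow> 'a tens" where
  "brack q (Leaf i) = gen i"
| "brack q (Node s t) =
     tadd (tmul (brack q t) (brack q s)) (tsmul (- chi q t s) (tmul (brack q s) (brack q t)))"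

fun commt :: "btree \<Rightarrow> 'a::comm_ring_1 tens" where
  "commt (Leaf i) = gen i"
| "commt (Node s t) = tadd (tmul (commt s) (commt t)) (tsmul (- 1) (tmul (commt t) (commt s)))"

inductive_set lspan :: "'a::comm_ring_1 tens set \<Rightarrow> 'a tens set" for S where
  lspan_zero: "tzero \<in> lspan S"
| lspan_step: "x \<in> S \<Longrightarrow> y \<in> lspan S \<Longrightarrow> tadd (tsmul c x) y \<in> lspan S"

text \<open>Subspaces of B(V), as images in T(V) under the symmetrizer.\<close>
definition NicholsL :: "(nat \<Rightarrow> nat \<Rightarrow> 'a::comm_ring_1) \<Rightarrow> nat \<Rightarrow> 'a tens set" where
  "NicholsL q n = symm q ` lspan {brack q t | t. set (leaves t) \<subseteq> {..<n}}"

definition NicholsLminus :: "(nat \<Rightarrow> nat \<Rightarrow> 'a::comm_ring_1) \<Rightarrow> nat \<Rightarrow> 'a tens set" where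
  "NicholsLminus q n = symm q ` lspan {commt t | t. set (leaves t) \<subseteq> {..<n}}"

definition NicholsV :: "(nat \<Rightarrow> nat \<Rightarrow> 'a::comm_ring_1) \<Rightarrow> nat \<Rightarrow> 'a tens set" where
  "NicholsV q n = symm q ` lspan {gen i | i. i < n}"

definition alg_closed :: "'a::field itself \<Rightarrow> bool" where
  "alg_closed _ = (\<forall>p :: 'a poly. 0 < degree p \<longrightarrow> (\<exists>x. poly p x = 0))"

end

theory Submission
  imports Defs
begin



lemma lspan_add: "x \<in> lspan S \<Longrightarrow> y \<in> lspan S \<Longrightarrow> tadd x y \<in> lspan S"
proof (induction x rule: lspan.induct)
  case lspan_zero then show ?case by (simp add: tadd_def tzero_def)
next
  case (lspan_step x y' c)
  have "tadd (tadd (tsmul c x) y') y = tadd (tsmul c x) (tadd y' y)"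
    by (simp add: tadd_def add.assoc)
  then show ?case using lspan_step by (simp add: lspan.lspan_step)
qed

lemma lspan_smul: "x \<in> lspan S \<Longrightarrow> tsmul c x \<in> lspan S"
proof (induction x rule: lspan.induct)
  case lspan_zero
  have "tsmul c tzero = tzero" by (simp add: tsmul_def tzero_def)
  then show ?case by (simp add: lspan.lspan_zero)
next
  case (lspan_step x y d)
  have "tsmul c (tadd (tsmul d x) y) = tadd (tsmul (c*d) x) (tsmul c y)"
    by (simp add: tadd_def tsmul_def algebra_simps)
  then show ?case using lspan_step by (simp add: lspan.lspan_step)
qed

lemma lspan_base: "x \<in> S \<Longrightarrow> x \<in> lspan S"
proof -
  assume "x \<in> S"
  then have "tadd (tsmul 1 x) tzero \<in> lspan S" by (rule lspan.lspan_step) (rule lspan.lspan_zero)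
  moreover have "tadd (tsmul 1 x) tzero = x" by (simp add: tadd_def tsmul_def tzero_def)
  ultimately show ?thesis by simp
qed

lemma lspan_sub: "S \<subseteq> lspan T \<Longrightarrow> lspan S \<subseteq> lspan T"
proof
  fix x assume a: "S \<subseteq> lspan T" and "x \<in> lspan S"
  from this(2) show "x \<in> lspan T" using a
    by (induction x rule: lspan.induct) (auto intro: lspan.lspan_zero lspan_add lspan_smul)
qed

lemma symm_tadd: "symm q (tadd f g) = tadd (symm q f) (symm q g)"
  by (simp add: symm_def tadd_def distrib_left sum.distrib fun_eq_iff)

lemma symm_tsmul: "symm q (tsmul c f) = tsmul c (symm q f)"
  by (simp add: symm_def tsmul_def sum_distrib_left fun_eq_iff algebra_simps)

lemma symm_tzero: "symm q tzero = tzero"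
  by (simp add: symm_def tzero_def fun_eq_iff)

lemma symm_image_lspan: "symm q ` lspan S = lspan (symm q ` S)"
proof
  show "symm q ` lspan S \<subseteq> lspan (symm q ` S)"
  proof
    fix y assume "y \<in> symm q ` lspan S"
    then obtain x where x: "x \<in> lspan S" "y = symm q x" by auto
    from x(1) have "symm q x \<in> lspan (symm q ` S)"
      by (induction x rule: lspan.induct)
         (auto simp: symm_tadd symm_tsmul symm_tzero intro: lspan.lspan_zero lspan.lspan_step)
    then show "y \<in> lspan (symm q ` S)" using x by simp
  qed
next
  show "lspan (symm q ` S) \<subseteq> symm q ` lspan S"
  proof
    fix y assume "y \<in> lspan (symm q ` S)"
    then show "y \<in> symm q ` lspan S"
    proof (induction y rule: lspan.induct)
      case lspan_zero
      then show ?case using symm_tzero lspan.lspan_zero by (metis image_eqI)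
    next
      case (lspan_step x y c)
      then obtain x0 y0 where "x0 \<in> S" "x = symm q x0" "y0 \<in> lspan S" "y = symm q y0" by auto
      then show ?case
        by (metis image_eqI lspan.lspan_step symm_tadd symm_tsmul)
    qed
  qed
qed

lemma tmul_nz: "tmul f g w \<noteq> 0 \<Longrightarrow> \<exists>k\<le>length w. f (take k w) \<noteq> 0 \<and> g (drop k w) \<noteq> 0"
  unfolding tmul_def by (metis (no_types, lifting) atMost_iff mult_not_zero sum.neutral)

lemma brack_supp: "brack q t w \<noteq> 0 \<Longrightarrow> mset w = mset (leaves t)"
proof (induction t arbitrary: w)
  case (Leaf i) then show ?case by (auto simp: gen_def split: if_splits)
next
  case (Node s t)
  from Node.prems have "tmul (brack q t) (brack q s) w \<noteq> 0 \<or> tmul (brack q s) (brack q t) w \<noteq> 0"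
    by (auto simp: tadd_def tsmul_def)
  then show ?case
  proof
    assume "tmul (brack q t) (brack q s) w \<noteq> 0"
    then obtain k where "brack q t (take k w) \<noteq> 0" "brack q s (drop k w) \<noteq> 0" using tmul_nz by blast
    then have "mset (take k w) = mset (leaves t)" "mset (drop k w) = mset (leaves s)" using Node.IH by auto
    then show ?thesis by (metis append_take_drop_id mset_append add.commute leaves.simps(2))
  next
    assume "tmul (brack q s) (brack q t) w \<noteq> 0"
    then obtain k where "brack q s (take k w) \<noteq> 0" "brack q t (drop k w) \<noteq> 0" using tmul_nz by blast
    then have "mset (take k w) = mset (leaves s)" "mset (drop k w) = mset (leaves t)" using Node.IH by auto
    then show ?thesis by (metis append_take_drop_id mset_append leaves.simps(2))
  qed
qed

lemma commt_supp: "(commt t :: 'a::comm_ring_1 tens) w \<noteq> 0 \<Longrightarrow> mset w = mset (leaves t)"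
proof (induction t arbitrary: w)
  case (Leaf i) then show ?case by (auto simp: gen_def split: if_splits)
next
  case (Node s t)
  from Node.prems have "tmul (commt t) (commt s :: 'a tens) w \<noteq> 0 \<or> tmul (commt s) (commt t :: 'a tens) w \<noteq> 0"
    by (auto simp: tadd_def tsmul_def)
  then show ?case
  proof
    assume "tmul (commt t) (commt s :: 'a tens) w \<noteq> 0"
    then obtain k where "(commt t :: 'a tens) (take k w) \<noteq> 0" "(commt s :: 'a tens) (drop k w) \<noteq> 0" using tmul_nz by blast
    then have "mset (take k w) = mset (leaves t)" "mset (drop k w) = mset (leaves s)" using Node.IH by auto
    then show ?thesis by (metis append_take_drop_id mset_append add.commute leaves.simps(2))
  next
    assume "tmul (commt s) (commt t :: 'a tens) w \<noteq> 0"
    then obtain k where "(commt s :: 'a tens) (take k w) \<noteq> 0" "(commt t :: 'a tens) (drop k w) \<noteq> 0" using tmul_nz by blast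
    then have "mset (take k w) = mset (leaves s)" "mset (drop k w) = mset (leaves t)" using Node.IH by auto
    then show ?thesis by (metis append_take_drop_id mset_append leaves.simps(2))
  qed
qed




lemma perm2: "\<sigma> permutes {..<2::nat} \<Longrightarrow> \<sigma> = id \<or> \<sigma> = transpose 0 1"
proof -
  assume p: "\<sigma> permutes {..<2::nat}"
  have out: "\<And>x. x \<ge> 2 \<Longrightarrow> \<sigma> x = x" using p unfolding permutes_def by auto
  have "\<sigma> 0 < 2" "\<sigma> 1 < 2" using permutes_in_image[OF p] by auto
  moreover have "\<sigma> 0 \<noteq> \<sigma> 1" using permutes_inj[OF p] by (metis inj_eq zero_neq_one)
  ultimately have "(\<sigma> 0 = 0 \<and> \<sigma> 1 = 1) \<or> (\<sigma> 0 = 1 \<and> \<sigma> 1 = 0)" by auto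
  then show ?thesis
  proof
    assume h: "\<sigma> 0 = 0 \<and> \<sigma> 1 = 1"
    have "\<sigma> = id"
    proof
      fix x show "\<sigma> x = id x" using h out by (cases "x < 2") (auto simp: less_2_cases_iff)
    qed
    then show ?thesis by simp
  next
    assume h: "\<sigma> 0 = 1 \<and> \<sigma> 1 = 0"
    have "\<sigma> = transpose 0 1"
    proof
      fix x show "\<sigma> x = transpose 0 1 x" using h out by (cases "x < 2") (auto simp: less_2_cases_iff transpose_def)
    qed
    then show ?thesis by simp
  qed
qed

lemma perms2: "{\<sigma>. \<sigma> permutes {..<2::nat}} = {id, transpose 0 1}"
  using perm2 permutes_id permutes_swap_id[of 0 "{..<2::nat}" 1] by auto

lemma symm2: "symm q f [x, y] = f [x, y] + q y x * f [y, x]"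
proof -
  have ne: "id \<noteq> (transpose 0 1 :: nat \<Rightarrow> nat)" by (metis id_apply transpose_apply_first zero_neq_one)
  have i1: "{(a,b). a < b \<and> b < 2 \<and> id b < (id a::nat)} = {}" by auto
  have i2: "{(a,b). a < b \<and> b < 2 \<and> transpose 0 1 b < (transpose 0 1 a::nat)} = {(0,1)}"
    by (auto simp: transpose_def less_2_cases_iff)
  have m1: "map (\<lambda>a. [x,y] ! id a) [0..<2] = [x,y]" by (simp add: upt_rec)
  have m2: "map (\<lambda>a. [x,y] ! transpose 0 1 a) [0..<2] = [y,x]" by (simp add: upt_rec)
  have len: "length [x,y] = 2" by simp
  show ?thesis unfolding symm_def len perms2
    apply (subst sum.insert)
    using ne apply auto[2]
    unfolding i1 m1 using i2 m2 by simp
qed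




lemma leaves_ne: "leaves t \<noteq> []" by (induction t) auto

lemma len_one: "length (leaves t) = 1 \<Longrightarrow> \<exists>c. t = Leaf c"
proof (cases t)
  case (Node s r)
  assume h: "length (leaves t) = 1"
  then show ?thesis using Node leaves_ne[of s] leaves_ne[of r]
    by (cases "leaves s"; cases "leaves r") auto
qed simp

lemma len_two: "length (leaves t) = 2 \<Longrightarrow> \<exists>c d. t = Node (Leaf c) (Leaf d)"
proof (cases t)
  case (Node s r)
  assume h: "length (leaves t) = 2"
  have "leaves s \<noteq> []" "leaves r \<noteq> []" using leaves_ne by auto
  with h Node have "length (leaves s) = 1 \<and> length (leaves r) = 1"
    by (cases "leaves s"; cases "leaves r") auto
  then show ?thesis using Node len_one by blast
qed simp

lemma tmul_gen2: "tmul (gen c) (gen d) [x, y] = (if c = x \<and> d = y then 1 else (0::'a::comm_ring_1))"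
  by (simp add: tmul_def gen_def numeral_2_eq_2 atMost_Suc)

lemma brack2: "brack q (Node (Leaf c) (Leaf d)) [x, y] =
   (if d = x \<and> c = y then 1 else 0) - q d c * (if c = x \<and> d = y then 1 else 0)"
  by (simp add: tadd_def tsmul_def chi_def tmul_gen2)

lemma commt2: "(commt (Node (Leaf c) (Leaf d)) :: 'a::comm_ring_1 tens) [x, y] =
   (if c = x \<and> d = y then 1 else 0) - (if d = x \<and> c = y then 1 else 0)"
  by (simp add: tadd_def tsmul_def tmul_gen2)

lemma commt_anti: "(commt t :: 'a::comm_ring_1 tens) [y, x] = - commt t [x, y]"
proof (cases "length (leaves t) = 2")
  case True
  then obtain c d where "t = Node (Leaf c) (Leaf d)" using len_two by blast
  then show ?thesis by (simp only: commt2) (simp add: conj_commute)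
next
  case False
  then have "(commt t :: 'a tens) [y, x] = 0" "(commt t :: 'a tens) [x, y] = 0"
    using commt_supp[of t "[y,x]"] commt_supp[of t "[x,y]"] mset_eq_length by (metis length_Cons list.size(3) numeral_2_eq_2)+
  then show ?thesis by simp
qed

lemma lspan_commt_anti: "u \<in> lspan {commt t | t. P t} \<Longrightarrow> (u :: 'a::comm_ring_1 tens) [y, x] = - u [x, y]"
  proof (induction u rule: lspan.induct)
  case (lspan_step a b c)
  then obtain t where "a = commt t" by auto
  then have "a [y, x] = - a [x, y]" using commt_anti[of t y x] by simp
  then show ?case using lspan_step by (simp add: tadd_def tsmul_def)
qed (simp add: tzero_def)

lemma brack_gen0: assumes "q x y * q y x = 1"
  shows "brack q t [x, y] + q y x * brack q t [y, x] = 0"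
proof (cases "length (leaves t) = 2")
  case True
  then obtain c d where "t = Node (Leaf c) (Leaf d)" using len_two by blast
  then show ?thesis using assms
    by (simp only: brack2) (cases "c = x"; cases "d = y"; cases "c = y"; cases "d = x"; simp add: algebra_simps)
next
  case False
  then have "brack q t [y, x] = 0" "brack q t [x, y] = 0"
    using brack_supp[of q t "[y,x]"] brack_supp[of q t "[x,y]"] mset_eq_length by (metis length_Cons list.size(3) numeral_2_eq_2)+
  then show ?thesis by simp
qed

lemma lspan_brack0: assumes "q x y * q y x = 1"
  shows "v \<in> lspan {brack q t | t. P t} \<Longrightarrow> symm q v [x, y] = 0"
proof (induction v rule: lspan.induct)
  case lspan_zero then show ?case using symm_tzero[of q] by (simp add: tzero_def)
next
  case (lspan_step a b c)
  then obtain t where "a = brack q t" by auto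
  then have "symm q a [x,y] = 0" using brack_gen0[of q x y t, OF assms] by (simp add: symm2)
  then show ?case using lspan_step by (simp only: symm_tadd symm_tsmul) (simp add: tadd_def tsmul_def)
qed




lemma symm_brackNode_ab: "symm q (brack q (Node (Leaf b) (Leaf a))) [a, b] = 1 - q a b * q b a"
  by (simp only: symm2 brack2) (cases "a = b"; simp add: algebra_simps)

lemma symm_brackNode_ba: "a \<noteq> b \<Longrightarrow> symm q (brack q (Node (Leaf b) (Leaf a))) [b, a] = 0"
  by (simp only: symm2 brack2) simp

lemma symm_commtNode: "a \<noteq> b \<Longrightarrow> symm q (commt (Node (Leaf a) (Leaf b))) [a, b] = 1 - q b a"
  by (simp only: symm2 commt2) simp

lemma symm_u: "u \<in> lspan {commt t | t. P t} \<Longrightarrow> symm q u [x, y] = (1 - q y x) * u [x, y]"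
  using lspan_commt_anti[of u P x y] by (simp add: symm2 algebra_simps)

lemma forward_Q:
  fixes q :: "nat \<Rightarrow> nat \<Rightarrow> 'a::field_char_0"
  assumes eq: "NicholsL q n = NicholsLminus q n" and ab: "a < n" "b < n"
  shows "\<exists>u. u \<in> lspan {commt t | t. set (leaves t) \<subseteq> {..<n}} \<and>
     symm q (brack q (Node (Leaf b) (Leaf a))) = symm q u"
proof -
  have "brack q (Node (Leaf b) (Leaf a)) \<in> {brack q t | t. set (leaves t) \<subseteq> {..<n}}"
    using ab by (metis (mono_tags, lifting) empty_subsetI insert_subset lessThan_iff leaves.simps list.set mem_Collect_eq set_append Un_subset_iff)
  then have "symm q (brack q (Node (Leaf b) (Leaf a))) \<in> NicholsL q n"
    unfolding NicholsL_def by (blast intro: lspan_base)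
  then show ?thesis using eq unfolding NicholsLminus_def by auto
qed

lemma forward_pair:
  fixes q :: "nat \<Rightarrow> nat \<Rightarrow> 'a::field_char_0"
  assumes eq: "NicholsL q n = NicholsLminus q n" and ab: "a < n" "b < n"
  shows "q a b * q b a = 1 \<and> (a \<noteq> b \<longrightarrow> q b a = 1)"
proof -
  have step1: "q a b * q b a \<noteq> 1 \<Longrightarrow> a \<noteq> b \<Longrightarrow> q a b = 1" if ab1: "a < n" "b < n" for a b
  proof -
    assume Q: "q a b * q b a \<noteq> 1" and ne: "a \<noteq> b"
    obtain u where u: "u \<in> lspan {commt t | t. set (leaves t) \<subseteq> {..<n}}"
      "symm q (brack q (Node (Leaf b) (Leaf a))) = symm q u" using forward_Q[OF eq ab1] by blast
    have e1: "1 - q a b * q b a = (1 - q b a) * u [a, b]"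
      using symm_brackNode_ab[of q b a] symm_u[OF u(1), of q a b] u(2) by simp
    have e2: "0 = (1 - q a b) * u [b, a]"
      using symm_brackNode_ba[OF ne, of q] symm_u[OF u(1), of q b a] u(2) by simp
    have "u [a, b] \<noteq> 0" using e1 Q by auto
    moreover have "u [b, a] = - u [a, b]" using lspan_commt_anti[OF u(1)] by blast
    ultimately show "q a b = 1" using e2 by simp
  qed
  have Q: "q a b * q b a = 1"
  proof (cases "a = b")
    case True
    obtain u where u: "u \<in> lspan {commt t | t. set (leaves t) \<subseteq> {..<n}}"
      "symm q (brack q (Node (Leaf b) (Leaf a))) = symm q u" using forward_Q[OF eq ab] by blast
    have "u [a, a] = - u [a, a]" using lspan_commt_anti[OF u(1)] by blast
    then have "u [a, a] = 0" by simp
    then show ?thesis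
      using symm_brackNode_ab[of q b a] symm_u[OF u(1), of q a b] u(2) True by simp
  next
    case False
    show ?thesis
    proof (rule ccontr)
      assume "q a b * q b a \<noteq> 1"
      then have "q a b = 1" "q b a = 1" using step1[OF ab] step1[OF ab(2,1)] False by (auto simp: mult.commute)
      then show False using \<open>q a b * q b a \<noteq> 1\<close> by simp
    qed
  qed
  have "q b a = 1" if ne: "a \<noteq> b"
  proof -
    have "commt (Node (Leaf a) (Leaf b)) \<in> {commt t | t. set (leaves t) \<subseteq> {..<n}}"
      using ab by (intro CollectI exI[of _ "Node (Leaf a) (Leaf b)"]) auto
    then have "symm q (commt (Node (Leaf a) (Leaf b))) \<in> NicholsLminus q n"
      unfolding NicholsLminus_def by (blast intro: lspan_base)
    then obtain v where v: "v \<in> lspan {brack q t | t. set (leaves t) \<subseteq> {..<n}}"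
      "symm q (commt (Node (Leaf a) (Leaf b))) = symm q v"
      using eq unfolding NicholsL_def by auto
    have "symm q v [a, b] = 0" using lspan_brack0[OF Q v(1)] .
    then show ?thesis using symm_commtNode[OF ne, of q] v(2) by simp
  qed
  then show ?thesis using Q by blast
qed




lemma sym_diff_prod:
  fixes W :: "'b \<Rightarrow> 'a::comm_ring_1"
  assumes fA: "finite A" and fB: "finite B" and sq: "\<And>x. x \<in> A \<Longrightarrow> W x * W x = 1"
  shows "prod W B = prod W A * prod W ((A - B) \<union> (B - A))"
proof -
  have 1: "prod W B = prod W (B \<inter> A) * prod W (B - A)" by (rule prod.Int_Diff[OF fB])
  have 2: "prod W A = prod W (A \<inter> B) * prod W (A - B)" by (rule prod.Int_Diff[OF fA])
  have 3: "prod W ((A - B) \<union> (B - A)) = prod W (A - B) * prod W (B - A)"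
    by (rule prod.union_disjoint) (use fA fB in auto)
  have 4: "prod W (A - B) * prod W (A - B) = 1"
    by (simp add: prod.distrib[symmetric] sq)
  have "prod W A * prod W ((A - B) \<union> (B - A)) = prod W (A \<inter> B) * (prod W (A - B) * prod W (A - B)) * prod W (B - A)"
    by (simp add: 2 3 algebra_simps)
  also have "\<dots> = prod W B" by (simp add: 4 1 Int_commute)
  finally show ?thesis by simp
qed

lemma tau_lt: "p < m \<Longrightarrow> p' < m \<Longrightarrow> (transpose p p' z < m) = (z < m)"
  by (auto simp: transpose_def)

lemma swap_prod:
  fixes W :: "nat \<Rightarrow> nat \<Rightarrow> 'a::comm_ring_1" and r :: "nat \<Rightarrow> nat"
  assumes inj: "inj_on r {..<m}" and pp: "p < p'" "p' < m"
    and sym: "\<And>x y. x < m \<Longrightarrow> y < m \<Longrightarrow> W x y = W y x"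
    and sq: "\<And>x y. x < m \<Longrightarrow> y < m \<Longrightarrow> W x y * W x y = 1"
    and neg: "W p' p = -1"
    and mid: "\<And>c. p < c \<Longrightarrow> c < p' \<Longrightarrow> W c p * W p' c = 1"
  shows "(\<Prod>(x,y)\<in>{(x,y). transpose p p' y < transpose p p' x \<and> x < m \<and> r x < r y}. W x y)
       = - (\<Prod>(x,y)\<in>{(x,y). y < x \<and> x < m \<and> r x < r y}. W x y)"
proof -
  define \<tau> where "\<tau> = transpose p p'"
  have tl: "\<And>z. (\<tau> z < m) = (z < m)" unfolding \<tau>_def using tau_lt[of p m p'] pp by auto
  have tt: "\<And>z. \<tau> (\<tau> z) = z" unfolding \<tau>_def by simp
  define A where "A = {(x,y). y < x \<and> x < m \<and> r x < r y}"
  define B where "B = {(x,y). \<tau> y < \<tau> x \<and> x < m \<and> r x < r y}"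
  have Asub: "A \<subseteq> {..<m} \<times> {..<m}" unfolding A_def by auto
  have Bsub: "B \<subseteq> {..<m} \<times> {..<m}"
  proof
    fix z assume "z \<in> B"
    then obtain x y where z: "z = (x,y)" "\<tau> y < \<tau> x" "x < m" unfolding B_def by auto
    then have "\<tau> x < m" using tl by auto
    then have "\<tau> y < m" using z by auto
    then show "z \<in> {..<m} \<times> {..<m}" using z tl by auto
  qed
  have fA: "finite A" by (rule finite_subset[OF Asub]) auto
  have fB: "finite B" by (rule finite_subset[OF Bsub]) auto
  define S where "S = (A - B) \<union> (B - A)"
  have Seq: "S = {(x,y). x < m \<and> y < m \<and> r x < r y \<and> ((y < x) \<noteq> (\<tau> y < \<tau> x))}"
    using Asub Bsub unfolding S_def A_def B_def by auto
  have main: "prod (case_prod W) B = prod (case_prod W) A * prod (case_prod W) S"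
    unfolding S_def by (rule sym_diff_prod[OF fA fB]) (use Asub sq in auto)
  define T where "T = {(x,y). y < x \<and> x < m \<and> \<tau> x < \<tau> y}"
  have ST: "prod (case_prod W) S = prod (case_prod W) T"
  proof (rule prod.reindex_bij_witness[where i = "\<lambda>(x,y). if r x < r y then (x,y) else (y,x)"
        and j = "\<lambda>(x,y). if y < x then (x,y) else (y,x)"])
    fix a assume "a \<in> S"
    then obtain x y where a: "a = (x,y)" "x < m" "y < m" "r x < r y" "(y < x) \<noteq> (\<tau> y < \<tau> x)"
      unfolding Seq by auto
    have xy: "x \<noteq> y" using a by auto
    have txy: "\<tau> x \<noteq> \<tau> y" using xy tt by metis
    show "(case (case a of (x, y) \<Rightarrow> if y < x then (x, y) else (y, x)) of
          (x, y) \<Rightarrow> if r x < r y then (x, y) else (y, x)) = a"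
      using a by auto
    show "(case a of (x, y) \<Rightarrow> if y < x then (x, y) else (y, x)) \<in> T"
      using a xy txy unfolding T_def by (auto simp: not_less_iff_gr_or_eq)
    show "(case case a of (x, y) \<Rightarrow> if y < x then (x, y) else (y, x) of (x, y) \<Rightarrow> W x y) = (case a of (x, y) \<Rightarrow> W x y)"
      using a sym by auto
  next
    fix b assume "b \<in> T"
    then obtain x y where b: "b = (x,y)" "y < x" "x < m" "\<tau> x < \<tau> y" unfolding T_def by auto
    have rxy: "r x \<noteq> r y" using inj b by (metis inj_on_def lessThan_iff less_trans order_less_irrefl)
    show "(case case b of (x, y) \<Rightarrow> if r x < r y then (x, y) else (y, x) of
          (x, y) \<Rightarrow> if y < x then (x, y) else (y, x)) = b"
      using b by auto
    show "(case b of (x, y) \<Rightarrow> if r x < r y then (x, y) else (y, x)) \<in> S"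
      using b rxy unfolding Seq by (auto simp: not_less_iff_gr_or_eq)
  qed
  have Teq: "T = insert (p', p) ((\<lambda>c. (c, p)) ` {p<..<p'} \<union> (\<lambda>c. (p', c)) ` {p<..<p'})"
    using pp unfolding T_def \<tau>_def by (auto simp: transpose_def split: if_splits)
  have "prod (case_prod W) T = W p' p * (prod (case_prod W) ((\<lambda>c. (c, p)) ` {p<..<p'}) *
          prod (case_prod W) ((\<lambda>c. (p', c)) ` {p<..<p'}))"
    unfolding Teq
    apply (subst prod.insert)
      apply auto[2]
    apply (subst prod.union_disjoint)
       apply auto
    done
  also have "\<dots> = W p' p * ((\<Prod>c\<in>{p<..<p'}. W c p) * (\<Prod>c\<in>{p<..<p'}. W p' c))"
    by (subst prod.reindex, simp add: inj_on_def)+ simp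
  also have "\<dots> = -1" using neg mid by (simp add: prod.distrib[symmetric])
  finally have "prod (case_prod W) T = -1" .
  then show ?thesis using main ST unfolding A_def[symmetric] B_def[symmetric] \<tau>_def[symmetric] by simp
qed




definition cw :: "(nat \<Rightarrow> nat \<Rightarrow> 'a::comm_ring_1) \<Rightarrow> nat list \<Rightarrow> (nat \<Rightarrow> nat) \<Rightarrow> 'a" where
  "cw q w \<sigma> = (\<Prod>(a,b)\<in>{(a,b). a < b \<and> b < length w \<and> \<sigma> b < \<sigma> a}. q (w ! \<sigma> a) (w ! \<sigma> b))"

lemma symm_alt: "symm q f w = (\<Sum>\<sigma>\<in>{\<sigma>. \<sigma> permutes {..<length w}}. cw q w \<sigma> * f (permute_list \<sigma> w))"
  by (simp add: symm_def cw_def permute_list_def)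

lemma cw_orig:
  assumes p: "\<sigma> permutes {..<length w}"
  shows "cw q w \<sigma> = (\<Prod>(x,y)\<in>{(x,y). y < x \<and> x < length w \<and> inv \<sigma> x < inv \<sigma> y}. q (w!x) (w!y))"
  unfolding cw_def
proof (rule prod.reindex_bij_witness[where i = "\<lambda>(x,y). (inv \<sigma> x, inv \<sigma> y)" and j = "\<lambda>(a,b). (\<sigma> a, \<sigma> b)"])
  have inv1: "\<And>x. \<sigma> (inv \<sigma> x) = x" and inv2: "\<And>x. inv \<sigma> (\<sigma> x) = x" using permutes_inverses[OF p] by auto
  have im: "\<And>x. x < length w \<Longrightarrow> \<sigma> x < length w" using permutes_in_image[OF p] by auto
  have im2: "\<And>x. x < length w \<Longrightarrow> inv \<sigma> x < length w" using permutes_in_image[OF permutes_inv[OF p]] by auto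
  fix a assume "a \<in> {(a, b). a < b \<and> b < length w \<and> \<sigma> b < \<sigma> a}"
  then obtain x y where a: "a = (x,y)" "x < y" "y < length w" "\<sigma> y < \<sigma> x" by auto
  show "(case case a of (a, b) \<Rightarrow> (\<sigma> a, \<sigma> b) of (x, y) \<Rightarrow> (inv \<sigma> x, inv \<sigma> y)) = a"
    using a inv2 by auto
  show "(case a of (a, b) \<Rightarrow> (\<sigma> a, \<sigma> b)) \<in> {(x, y). y < x \<and> x < length w \<and> inv \<sigma> x < inv \<sigma> y}"
    using a inv2 im by auto
  show "(case case a of (a, b) \<Rightarrow> (\<sigma> a, \<sigma> b) of (x, y) \<Rightarrow> q (w ! x) (w ! y)) =
        (case a of (a, b) \<Rightarrow> q (w ! \<sigma> a) (w ! \<sigma> b))" using a by auto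
next
  have inv1: "\<And>x. \<sigma> (inv \<sigma> x) = x" and inv2: "\<And>x. inv \<sigma> (\<sigma> x) = x" using permutes_inverses[OF p] by auto
  have im2: "\<And>x. x < length w \<Longrightarrow> inv \<sigma> x < length w" using permutes_in_image[OF permutes_inv[OF p]] by auto
  fix b assume "b \<in> {(x, y). y < x \<and> x < length w \<and> inv \<sigma> x < inv \<sigma> y}"
  then obtain x y where b: "b = (x,y)" "y < x" "x < length w" "inv \<sigma> x < inv \<sigma> y" by auto
  show "(case case b of (x, y) \<Rightarrow> (inv \<sigma> x, inv \<sigma> y) of (a, b) \<Rightarrow> (\<sigma> a, \<sigma> b)) = b"
    using b inv1 by auto
  show "(case b of (x, y) \<Rightarrow> (inv \<sigma> x, inv \<sigma> y)) \<in> {(a, b). a < b \<and> b < length w \<and> \<sigma> b < \<sigma> a}"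
    using b inv1 im2[of y] by auto
qed

lemma w_tau: "w ! p = w ! p' \<Longrightarrow> w ! (transpose p p' z) = w ! z"
  by (auto simp: transpose_def)

lemma cw_tau:
  assumes p: "\<sigma> permutes {..<length w}" and pp: "p < length w" "p' < length w" and eqw: "w ! p = w ! p'"
  shows "cw q w (transpose p p' \<circ> \<sigma>) =
    (\<Prod>(x,y)\<in>{(x,y). transpose p p' y < transpose p p' x \<and> x < length w \<and> inv \<sigma> x < inv \<sigma> y}. q (w!x) (w!y))"
proof -
  let ?t = "transpose p p'"
  have tp: "?t permutes {..<length w}" using pp by (simp add: permutes_swap_id)
  have pc: "?t \<circ> \<sigma> permutes {..<length w}" using permutes_compose[OF p tp] .
  have invc: "inv (?t \<circ> \<sigma>) = inv \<sigma> \<circ> ?t"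
    using o_inv_distrib[of ?t \<sigma>] permutes_bij[OF tp] permutes_bij[OF p] by simp
  have tl: "\<And>z. (?t z < length w) = (z < length w)" using tau_lt[OF pp] by auto
  have "cw q w (?t \<circ> \<sigma>) = (\<Prod>(x,y)\<in>{(x,y). y < x \<and> x < length w \<and> inv \<sigma> (?t x) < inv \<sigma> (?t y)}. q (w!x) (w!y))"
    using cw_orig[OF pc] invc by simp
  also have "\<dots> = (\<Prod>(x,y)\<in>{(x,y). ?t y < ?t x \<and> x < length w \<and> inv \<sigma> x < inv \<sigma> y}. q (w!x) (w!y))"
  proof (rule prod.reindex_bij_witness[where i = "\<lambda>(x,y). (?t x, ?t y)" and j = "\<lambda>(x,y). (?t x, ?t y)"])
    fix a assume a: "a \<in> {(x,y). y < x \<and> x < length w \<and> inv \<sigma> (?t x) < inv \<sigma> (?t y)}"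
    show "(case case a of (x, y) \<Rightarrow> (?t x, ?t y) of (x, y) \<Rightarrow> (?t x, ?t y)) = a" by (cases a) simp
    obtain x y where ax: "a = (x,y)" "y < x" "x < length w" "inv \<sigma> (?t x) < inv \<sigma> (?t y)" using a by blast
    have h1: "?t (?t y) < ?t (?t x)" using ax(2) by simp
    have h2: "?t x < length w" using tl ax(3) by blast
    show "(case a of (x, y) \<Rightarrow> (?t x, ?t y)) \<in> {(x,y). ?t y < ?t x \<and> x < length w \<and> inv \<sigma> x < inv \<sigma> y}"
      using h1 h2 ax(4) unfolding ax(1) by (simp only: case_prod_conv mem_Collect_eq)
    show "(case case a of (x, y) \<Rightarrow> (?t x, ?t y) of (x, y) \<Rightarrow> q (w ! x) (w ! y)) = (case a of (x, y) \<Rightarrow> q (w ! x) (w ! y))"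
      using w_tau[OF eqw] by (cases a) simp
  next
    fix b assume b: "b \<in> {(x,y). ?t y < ?t x \<and> x < length w \<and> inv \<sigma> x < inv \<sigma> y}"
    show "(case case b of (x, y) \<Rightarrow> (?t x, ?t y) of (x, y) \<Rightarrow> (?t x, ?t y)) = b" by (cases b) simp
    obtain x y where bx: "b = (x,y)" "?t y < ?t x" "x < length w" "inv \<sigma> x < inv \<sigma> y" using b by blast
    have h1: "?t (?t x) = x" "?t (?t y) = y" by simp_all
    have h2: "?t x < length w" using tl bx(3) by blast
    show "(case b of (x, y) \<Rightarrow> (?t x, ?t y)) \<in> {(x,y). y < x \<and> x < length w \<and> inv \<sigma> (?t x) < inv \<sigma> (?t y)}"
      using h1 h2 bx(2,4) unfolding bx(1) by simp
  qed
  finally show ?thesis .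
qed

definition condq :: "(nat \<Rightarrow> nat \<Rightarrow> 'a::field) \<Rightarrow> nat \<Rightarrow> bool" where
  "condq q n = ((\<forall>i<n. (q i i)^2 = 1) \<and> (\<forall>i<n. \<forall>j<n. i \<noteq> j \<longrightarrow> q i j = 1 \<and> q j i = 1))"

lemma condq_sym: "condq q n \<Longrightarrow> a < n \<Longrightarrow> b < n \<Longrightarrow> q a b = q b a"
  unfolding condq_def by (cases "a = b") auto

lemma condq_sq: "condq q n \<Longrightarrow> a < n \<Longrightarrow> b < n \<Longrightarrow> q a b * q a b = 1"
  unfolding condq_def by (cases "a = b") (auto simp: power2_eq_square)

lemma condq_pm: "condq q n \<Longrightarrow> a < n \<Longrightarrow> q a a = 1 \<or> q a a = -1"
  using condq_sq[of q n a a] by (simp add: square_eq_1_iff)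

lemma cw_tau_neg:
  fixes q :: "nat \<Rightarrow> nat \<Rightarrow> 'a::field"
  assumes C: "condq q n" and sw: "set w \<subseteq> {..<n}"
    and p: "\<sigma> permutes {..<length w}" and pp: "p < p'" "p' < length w" and eqw: "w ! p = w ! p'"
    and odd: "q (w ! p) (w ! p) = -1"
  shows "cw q w (transpose p p' \<circ> \<sigma>) = - cw q w \<sigma>"
proof -
  have lt: "\<And>x. x < length w \<Longrightarrow> w ! x < n" using sw nth_mem by blast
  have inj: "inj_on (inv \<sigma>) {..<length w}"
    using permutes_inj[OF permutes_inv[OF p]] by (simp add: inj_on_def inj_def)
  have "cw q w (transpose p p' \<circ> \<sigma>) =
    (\<Prod>(x,y)\<in>{(x,y). transpose p p' y < transpose p p' x \<and> x < length w \<and> inv \<sigma> x < inv \<sigma> y}. q (w!x) (w!y))"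
    using cw_tau[OF p _ pp(2) eqw] pp by simp
  also have "\<dots> = - (\<Prod>(x,y)\<in>{(x,y). y < x \<and> x < length w \<and> inv \<sigma> x < inv \<sigma> y}. q (w!x) (w!y))"
  proof (rule swap_prod[OF inj pp])
    show "\<And>x y. x < length w \<Longrightarrow> y < length w \<Longrightarrow> q (w ! x) (w ! y) = q (w ! y) (w ! x)"
      using condq_sym[OF C] lt by blast
    show "\<And>x y. x < length w \<Longrightarrow> y < length w \<Longrightarrow> q (w ! x) (w ! y) * q (w ! x) (w ! y) = 1"
      using condq_sq[OF C] lt by blast
    show "q (w ! p') (w ! p) = - 1" using odd eqw by simp
    show "\<And>c. p < c \<Longrightarrow> c < p' \<Longrightarrow> q (w ! c) (w ! p) * q (w ! p') (w ! c) = 1"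
    proof -
      fix c assume c: "p < c" "c < p'"
      have "q (w ! p') (w ! c) = q (w ! c) (w ! p)" using condq_sym[OF C] lt c pp eqw by simp
      then show "q (w ! c) (w ! p) * q (w ! p') (w ! c) = 1" using condq_sq[OF C] lt c pp by simp
    qed
  qed
  also have "\<dots> = - cw q w \<sigma>" by (simp only: cw_orig[OF p])
  finally show ?thesis .
qed

lemma rep_odd:
  fixes q :: "nat \<Rightarrow> nat \<Rightarrow> 'a::field_char_0"
  assumes C: "condq q n" and sw: "set w \<subseteq> {..<n}"
    and pp: "p < p'" "p' < length w" and eqw: "w ! p = w ! p'"
    and odd: "q (w ! p) (w ! p) = -1"
  shows "symm q f w = 0"
proof -
  let ?t = "transpose p p'"
  let ?P = "{\<sigma>. \<sigma> permutes {..<length w}}"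
  let ?F = "\<lambda>\<sigma>. cw q w \<sigma> * f (permute_list \<sigma> w)"
  have tp: "?t permutes {..<length w}" using pp by (simp add: permutes_swap_id)
  have "sum ?F ?P = sum (\<lambda>\<sigma>. ?F (?t \<circ> \<sigma>)) ?P" by (rule setum_permutations_compose_left[OF tp])
  also have "\<dots> = sum (\<lambda>\<sigma>. - ?F \<sigma>) ?P"
  proof (rule sum.cong[OF refl])
    fix \<sigma> assume "\<sigma> \<in> ?P"
    then have p: "\<sigma> permutes {..<length w}" by simp
    have "permute_list (?t \<circ> \<sigma>) w = permute_list \<sigma> w"
      unfolding permute_list_def using w_tau[OF eqw] by simp
    then show "?F (?t \<circ> \<sigma>) = - ?F \<sigma>" using cw_tau_neg[OF C sw p pp eqw odd] by simp
  qed
  also have "\<dots> = - sum ?F ?P" by (simp add: sum_negf)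
  finally have "sum ?F ?P = 0" by simp
  then show ?thesis by (simp add: symm_alt)
qed




lemma rot_permutes:
  fixes k m :: nat
  assumes k: "k < m"
  shows "(\<lambda>a. if a < m then (k + a) mod m else a) permutes {..<m}"
proof (rule bij_imp_permutes)
  let ?r = "\<lambda>a. if a < m then (k + a) mod m else a"
  have m0: "0 < m" using k by simp
  have inj: "inj_on ?r {..<m}"
  proof (rule inj_onI)
    fix a b assume ab: "a \<in> {..<m}" "b \<in> {..<m}" "?r a = ?r b"
    then have e: "(k + a) mod m = (k + b) mod m" by simp
    have ea: "(k + a) mod m = (if k + a < m then k + a else k + a - m)"
      using ab k by (cases "k + a < m") (simp_all add: le_mod_geq)
    have eb: "(k + b) mod m = (if k + b < m then k + b else k + b - m)"
      using ab k by (cases "k + b < m") (simp_all add: le_mod_geq)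
    from e have "(if k + a < m then k + a else k + a - m) = (if k + b < m then k + b else k + b - m)"
      by (simp only: ea eb)
    then show "a = b" using ab k by (simp split: if_splits)
  qed
  have sub: "?r ` {..<m} \<subseteq> {..<m}" using m0 by auto
  show "bij_betw ?r {..<m} {..<m}"
    unfolding bij_betw_def using inj endo_inj_surj[OF _ sub inj] by simp
  show "\<And>x. x \<notin> {..<m} \<Longrightarrow> ?r x = x" by simp
qed

lemma permute_rot:
  assumes lv: "length v = m" and k: "k < m"
  shows "permute_list (\<lambda>a. if a < m then (k + a) mod m else a) v = rotate k v"
proof (rule nth_equalityI)
  show "length (permute_list (\<lambda>a. if a < m then (k + a) mod m else a) v) = length (rotate k v)" by simp
  fix i assume "i < length (permute_list (\<lambda>a. if a < m then (k + a) mod m else a) v)"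
  then have i: "i < length v" by simp
  have rp: "(\<lambda>a. if a < m then (k + a) mod m else a) permutes {..<length v}" using rot_permutes[OF k] lv by simp
  show "permute_list (\<lambda>a. if a < m then (k + a) mod m else a) v ! i = rotate k v ! i"
    using permute_list_nth[OF rp i] nth_rotate[OF i] i lv by simp
qed

lemma Phi_k:
  fixes f g :: "'a::comm_ring_1 tens"
  assumes k: "k \<le> length w"
  shows "(\<Sum>\<sigma>\<in>{\<sigma>. \<sigma> permutes {..<length w}}. f (take k (permute_list \<sigma> w)) * g (drop k (permute_list \<sigma> w)))
       = (\<Sum>\<sigma>\<in>{\<sigma>. \<sigma> permutes {..<length w}}. g (take (length w - k) (permute_list \<sigma> w)) * f (drop (length w - k) (permute_list \<sigma> w)))"
proof -
  let ?m = "length w"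
  let ?P = "{\<sigma>. \<sigma> permutes {..<length w}}"
  consider "k = 0" | "k = ?m" | "0 < k \<and> k < ?m" using k by linarith
  then show ?thesis
  proof cases
    case 1 then show ?thesis by (simp add: mult.commute)
  next
    case 2 then show ?thesis by (simp add: mult.commute)
  next
    case 3
    define \<rho> where "\<rho> = (\<lambda>a. if a < ?m then (k + a) mod ?m else a)"
    have rp: "\<rho> permutes {..<?m}" unfolding \<rho>_def using rot_permutes 3 by blast
    have "(\<Sum>\<sigma>\<in>?P. g (take (?m - k) (permute_list \<sigma> w)) * f (drop (?m - k) (permute_list \<sigma> w)))
        = (\<Sum>\<sigma>\<in>?P. g (take (?m - k) (permute_list (\<sigma> \<circ> \<rho>) w)) * f (drop (?m - k) (permute_list (\<sigma> \<circ> \<rho>) w)))"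
      by (rule sum_permutations_compose_right[OF rp])
    also have "\<dots> = (\<Sum>\<sigma>\<in>?P. f (take k (permute_list \<sigma> w)) * g (drop k (permute_list \<sigma> w)))"
    proof (rule sum.cong[OF refl])
      fix \<sigma> assume "\<sigma> \<in> ?P"
      let ?v = "permute_list \<sigma> w"
      have lv: "length ?v = ?m" by simp
      have "permute_list (\<sigma> \<circ> \<rho>) w = permute_list \<rho> ?v"
        using permute_list_compose[of \<rho> w \<sigma>] rp by simp
      also have "\<dots> = rotate k ?v" unfolding \<rho>_def using permute_rot[OF lv] 3 by simp
      also have "\<dots> = drop k ?v @ take k ?v" using rotate_drop_take[of k ?v] 3 lv by simp
      finally have e: "permute_list (\<sigma> \<circ> \<rho>) w = drop k ?v @ take k ?v" .
      have l1: "length (drop k ?v) = ?m - k" using lv by simp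
      show "g (take (?m - k) (permute_list (\<sigma> \<circ> \<rho>) w)) * f (drop (?m - k) (permute_list (\<sigma> \<circ> \<rho>) w))
          = f (take k ?v) * g (drop k ?v)"
        unfolding e using l1 by (metis append_eq_conv_conj mult.commute)
    qed
    finally show ?thesis by simp
  qed
qed

lemma Phi_comm:
  fixes f g :: "'a::comm_ring_1 tens"
  shows "(\<Sum>\<sigma>\<in>{\<sigma>. \<sigma> permutes {..<length w}}. tmul f g (permute_list \<sigma> w))
       = (\<Sum>\<sigma>\<in>{\<sigma>. \<sigma> permutes {..<length w}}. tmul g f (permute_list \<sigma> w))"
proof -
  let ?m = "length w"
  let ?P = "{\<sigma>. \<sigma> permutes {..<length w}}"
  have "(\<Sum>\<sigma>\<in>?P. tmul f g (permute_list \<sigma> w))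
      = (\<Sum>\<sigma>\<in>?P. \<Sum>k\<in>{0..?m}. f (take k (permute_list \<sigma> w)) * g (drop k (permute_list \<sigma> w)))"
    by (simp add: tmul_def atMost_atLeast0)
  also have "\<dots> = (\<Sum>k\<in>{0..?m}. \<Sum>\<sigma>\<in>?P. f (take k (permute_list \<sigma> w)) * g (drop k (permute_list \<sigma> w)))"
    by (rule sum.swap)
  also have "\<dots> = (\<Sum>k\<in>{0..?m}. \<Sum>\<sigma>\<in>?P. g (take (?m - k) (permute_list \<sigma> w)) * f (drop (?m - k) (permute_list \<sigma> w)))"
    by (rule sum.cong[OF refl]) (rule Phi_k, simp)
  also have "\<dots> = (\<Sum>k\<in>{0..?m}. \<Sum>\<sigma>\<in>?P. g (take k (permute_list \<sigma> w)) * f (drop k (permute_list \<sigma> w)))"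
    using sum.atLeastAtMost_rev[of "\<lambda>k. \<Sum>\<sigma>\<in>?P. g (take k (permute_list \<sigma> w)) * f (drop k (permute_list \<sigma> w))" 0 ?m]
    by simp
  also have "\<dots> = (\<Sum>\<sigma>\<in>?P. \<Sum>k\<in>{0..?m}. g (take k (permute_list \<sigma> w)) * f (drop k (permute_list \<sigma> w)))"
    by (rule sum.swap)
  also have "\<dots> = (\<Sum>\<sigma>\<in>?P. tmul g f (permute_list \<sigma> w))"
    by (simp add: tmul_def atMost_atLeast0)
  finally show ?thesis .
qed




definition ro :: "(nat \<Rightarrow> nat \<Rightarrow> 'a::comm_ring_1) \<Rightarrow> nat list \<Rightarrow> bool" where
  "ro q w = (\<exists>x y. x < length w \<and> y < length w \<and> x \<noteq> y \<and> w ! x = w ! y \<and> q (w ! x) (w ! x) = -1)"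

lemma cw_one:
  fixes q :: "nat \<Rightarrow> nat \<Rightarrow> 'a::field"
  assumes C: "condq q n" and sw: "set w \<subseteq> {..<n}" and nro: "\<not> ro q w"
    and p: "\<sigma> permutes {..<length w}"
  shows "cw q w \<sigma> = 1"
  unfolding cw_def
proof (rule prod.neutral, clarify)
  fix a b assume ab: "a < b" "b < length w" "\<sigma> b < \<sigma> a"
  have lt: "\<And>x. x < length w \<Longrightarrow> w ! x < n" using sw nth_mem by blast
  have ia: "\<sigma> a < length w" "\<sigma> b < length w" using permutes_in_image[OF p] ab by auto
  have ne: "\<sigma> a \<noteq> \<sigma> b" using ab by auto
  show "q (w ! \<sigma> a) (w ! \<sigma> b) = 1"
  proof (cases "w ! \<sigma> a = w ! \<sigma> b")
    case True
    have "q (w ! \<sigma> a) (w ! \<sigma> a) \<noteq> -1" using nro ia ne True unfolding ro_def by blast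
    then show ?thesis using condq_pm[OF C lt[OF ia(1)]] True by auto
  next
    case False
    then show ?thesis using C lt ia unfolding condq_def by blast
  qed
qed

lemma symm_noro:
  fixes q :: "nat \<Rightarrow> nat \<Rightarrow> 'a::field"
  assumes C: "condq q n" and sw: "set w \<subseteq> {..<n}" and nro: "\<not> ro q w"
  shows "symm q h w = (\<Sum>\<sigma>\<in>{\<sigma>. \<sigma> permutes {..<length w}}. h (permute_list \<sigma> w))"
  unfolding symm_alt by (rule sum.cong[OF refl]) (simp add: cw_one[OF C sw nro])

lemma symm_outside:
  assumes "\<And>v. h v \<noteq> 0 \<Longrightarrow> set v \<subseteq> {..<n}" and "\<not> set w \<subseteq> {..<n}"
  shows "symm q h w = 0"
  unfolding symm_alt
proof (rule sum.neutral, rule ballI)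
  fix \<sigma> assume "\<sigma> \<in> {\<sigma>. \<sigma> permutes {..<length w}}"
  then have "set (permute_list \<sigma> w) = set w" by simp
  then have "h (permute_list \<sigma> w) = 0" using assms by metis
  then show "cw q w \<sigma> * h (permute_list \<sigma> w) = 0" by simp
qed

lemma ro_pos: "ro q w \<Longrightarrow> \<exists>p p'. p < p' \<and> p' < length w \<and> w ! p = w ! p' \<and> q (w ! p) (w ! p) = -1"
  unfolding ro_def
proof (elim exE conjE)
  fix x y assume h: "x < length w" "y < length w" "x \<noteq> y" "w ! x = w ! y" "q (w ! x) (w ! x) = - 1"
  show ?thesis
  proof (cases "x < y")
    case True then show ?thesis using h by blast
  next
    case False then have "y < x" using h by simp
    then show ?thesis using h by (intro exI[of _ y] exI[of _ x]) simp
  qed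
qed

lemma prod_list_ones: "(\<forall>x\<in>set xs. x = 1) \<Longrightarrow> prod_list xs = (1::'a::comm_monoid_mult)"
  by (induction xs) auto

lemma Phi_zero:
  fixes q :: "nat \<Rightarrow> nat \<Rightarrow> 'a::field"
  assumes nro: "\<not> ro q w" and a1: "a \<in> set (leaves s)" and a2: "a \<in> set (leaves r)"
    and odd: "q a a = -1"
  shows "(\<Sum>\<sigma>\<in>{\<sigma>. \<sigma> permutes {..<length w}}. tmul (brack q s) (brack q r) (permute_list \<sigma> w)) = 0"
proof (rule sum.neutral, rule ballI)
  fix \<sigma> assume "\<sigma> \<in> {\<sigma>. \<sigma> permutes {..<length w}}"
  then have p: "\<sigma> permutes {..<length w}" by simp
  let ?v = "permute_list \<sigma> w"
  show "tmul (brack q s) (brack q r) ?v = 0"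
  proof (rule ccontr)
    assume "tmul (brack q s) (brack q r) ?v \<noteq> 0"
    then obtain k where k: "k \<le> length ?v" "brack q s (take k ?v) \<noteq> 0" "brack q r (drop k ?v) \<noteq> 0"
      using tmul_nz by blast
    have "a \<in> set (take k ?v)" using brack_supp[OF k(2)] a1 by (metis set_mset_mset)
    then obtain i where i: "i < length (take k ?v)" "take k ?v ! i = a" by (metis in_set_conv_nth)
    have "a \<in> set (drop k ?v)" using brack_supp[OF k(3)] a2 by (metis set_mset_mset)
    then obtain j where j: "j < length (drop k ?v)" "drop k ?v ! j = a" by (metis in_set_conv_nth)
    have il: "i < k" "i < length w" using i k by auto
    have jl: "k + j < length w" using j k by auto
    have vi: "w ! \<sigma> i = a" using i permute_list_nth[OF p il(2)] by simp
    have vj: "w ! \<sigma> (k + j) = a" using j permute_list_nth[OF p jl] k by simp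
    have ne: "\<sigma> i \<noteq> \<sigma> (k + j)" using permutes_inj[OF p] il by (metis add_diff_cancel_left' inj_eq less_irrefl le_add1 less_le_trans)
    have "\<sigma> i < length w" "\<sigma> (k + j) < length w" using permutes_in_image[OF p] il jl by auto
    then have "ro q w" unfolding ro_def using ne vi vj odd by metis
    then show False using nro by simp
  qed
qed

lemma vanish:
  fixes q :: "nat \<Rightarrow> nat \<Rightarrow> 'a::field_char_0"
  assumes C: "condq q n" and lv: "set (leaves (Node s r)) \<subseteq> {..<n}"
  shows "symm q (brack q (Node s r)) = tzero \<and> symm q (commt (Node s r)) = tzero"
proof -
  let ?P = "{\<sigma>. \<sigma> permutes {..<length w}}"
  have B: "symm q (brack q (Node s r)) w = 0" for w
  proof -
    consider "\<not> set w \<subseteq> {..<n}" | "set w \<subseteq> {..<n}" "ro q w" | "set w \<subseteq> {..<n}" "\<not> ro q w" by blast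
    then show ?thesis
    proof cases
      case 1
      show ?thesis
      proof (rule symm_outside[OF _ 1])
        fix v assume "brack q (Node s r) v \<noteq> 0"
        then have "mset v = mset (leaves (Node s r))" by (rule brack_supp)
        then show "set v \<subseteq> {..<n}" using lv by (metis set_mset_mset)
      qed
    next
      case 2
      then obtain p p' where "p < p'" "p' < length w" "w ! p = w ! p'" "q (w ! p) (w ! p) = -1"
        using ro_pos by blast
      then show ?thesis using rep_odd[OF C 2(1)] by blast
    next
      case 3
      let ?x = "chi q r s"
      have "symm q (brack q (Node s r)) w =
            (\<Sum>\<sigma>\<in>{\<sigma>. \<sigma> permutes {..<length w}}. tmul (brack q r) (brack q s) (permute_list \<sigma> w)
               + (- ?x) * tmul (brack q s) (brack q r) (permute_list \<sigma> w))"
        unfolding symm_noro[OF C 3] by (simp add: tadd_def tsmul_def)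
      also have "\<dots> = (\<Sum>\<sigma>\<in>{\<sigma>. \<sigma> permutes {..<length w}}. tmul (brack q r) (brack q s) (permute_list \<sigma> w))
               - ?x * (\<Sum>\<sigma>\<in>{\<sigma>. \<sigma> permutes {..<length w}}. tmul (brack q s) (brack q r) (permute_list \<sigma> w))"
        by (simp add: sum_subtractf sum_distrib_left)
      also have "\<dots> = (1 - ?x) * (\<Sum>\<sigma>\<in>{\<sigma>. \<sigma> permutes {..<length w}}. tmul (brack q s) (brack q r) (permute_list \<sigma> w))"
        using Phi_comm[of "brack q r" "brack q s" w] by (simp add: algebra_simps)
      also have "\<dots> = 0"
      proof (cases "?x = 1")
        case False
        have "\<not> (\<forall>x\<in>set [q a b. a \<leftarrow> leaves r, b \<leftarrow> leaves s]. x = 1)"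
          using False prod_list_ones unfolding chi_def by metis
        then obtain a b where ab: "a \<in> set (leaves r)" "b \<in> set (leaves s)" "q a b \<noteq> 1" by auto
        have an: "a < n" "b < n" using ab lv by auto
        then have "a = b" using C ab unfolding condq_def by blast
        then have "q a a = -1" using condq_pm[OF C an(1)] ab by auto
        then show ?thesis using Phi_zero[OF 3(2) _ ab(1)] ab(2) \<open>a = b\<close> by simp
      qed simp
      finally show ?thesis .
    qed
  qed
  have Cm: "symm q (commt (Node s r)) w = 0" for w
  proof -
    consider "\<not> set w \<subseteq> {..<n}" | "set w \<subseteq> {..<n}" "ro q w" | "set w \<subseteq> {..<n}" "\<not> ro q w" by blast
    then show ?thesis
    proof cases
      case 1
      show ?thesis
      proof (rule symm_outside[OF _ 1])
        fix v assume "(commt (Node s r) :: 'a tens) v \<noteq> 0"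
        then have "mset v = mset (leaves (Node s r))" by (rule commt_supp)
        then show "set v \<subseteq> {..<n}" using lv by (metis set_mset_mset)
      qed
    next
      case 2
      then obtain p p' where "p < p'" "p' < length w" "w ! p = w ! p'" "q (w ! p) (w ! p) = -1"
        using ro_pos by blast
      then show ?thesis using rep_odd[OF C 2(1)] by blast
    next
      case 3
      have "symm q (commt (Node s r)) w =
            (\<Sum>\<sigma>\<in>{\<sigma>. \<sigma> permutes {..<length w}}. tmul (commt s) (commt r :: 'a tens) (permute_list \<sigma> w)
               + (- 1) * tmul (commt r) (commt s :: 'a tens) (permute_list \<sigma> w))"
        unfolding symm_noro[OF C 3] by (simp add: tadd_def tsmul_def)
      also have "\<dots> = 0"
        using Phi_comm[of "commt s :: 'a tens" "commt r" w] by (simp add: sum_subtractf)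
      finally show ?thesis .
    qed
  qed
  show ?thesis using B Cm by (auto simp: tzero_def fun_eq_iff)
qed




lemma lspan_eq: "S \<subseteq> lspan T \<Longrightarrow> T \<subseteq> lspan S \<Longrightarrow> lspan S = lspan T"
  using lspan_sub by blast

lemma backward:
  fixes q :: "nat \<Rightarrow> nat \<Rightarrow> 'a::field_char_0"
  assumes C: "condq q n"
  shows "NicholsL q n = NicholsV q n \<and> NicholsLminus q n = NicholsV q n"
proof -
  have G: "symm q ` {gen i | i. i < n} \<subseteq> lspan (symm q ` {brack q t | t. set (leaves t) \<subseteq> {..<n}})"
  proof
    fix x assume "x \<in> symm q ` {gen i | i. i < n}"
    then obtain i where i: "i < n" "x = symm q (gen i)" by auto
    then have "x \<in> symm q ` {brack q t | t. set (leaves t) \<subseteq> {..<n}}"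
      using exI[of "\<lambda>t. gen i = brack q t \<and> set (leaves t) \<subseteq> {..<n}" "Leaf i"] by auto
    then show "x \<in> lspan (symm q ` {brack q t | t. set (leaves t) \<subseteq> {..<n}})" by (rule lspan_base)
  qed
  have G2: "symm q ` {gen i | i. i < n} \<subseteq> lspan (symm q ` {commt t | t. set (leaves t) \<subseteq> {..<n}})"
  proof
    fix x assume "x \<in> symm q ` {gen i | i. i < n}"
    then obtain i where i: "i < n" "x = symm q (gen i)" by auto
    then have "x \<in> symm q ` {commt t | t. set (leaves t) \<subseteq> {..<n}}"
      using exI[of "\<lambda>t. gen i = (commt t :: 'a tens) \<and> set (leaves t) \<subseteq> {..<n}" "Leaf i"] by auto
    then show "x \<in> lspan (symm q ` {commt t | t. set (leaves t) \<subseteq> {..<n}})" by (rule lspan_base)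
  qed
  have Bsub: "symm q ` {brack q t | t. set (leaves t) \<subseteq> {..<n}} \<subseteq> lspan (symm q ` {gen i | i. i < n})"
  proof
    fix x assume "x \<in> symm q ` {brack q t | t. set (leaves t) \<subseteq> {..<n}}"
    then obtain t where t: "set (leaves t) \<subseteq> {..<n}" "x = symm q (brack q t)" by auto
    show "x \<in> lspan (symm q ` {gen i | i. i < n})"
    proof (cases t)
      case (Leaf i)
      then have "x \<in> symm q ` {gen i | i. i < n}" using t by auto
      then show ?thesis by (rule lspan_base)
    next
      case (Node s r)
      then have "x = tzero" using vanish[OF C] t by blast
      then show ?thesis by (simp add: lspan.lspan_zero)
    qed
  qed
  have Csub: "symm q ` {commt t | t. set (leaves t) \<subseteq> {..<n}} \<subseteq> lspan (symm q ` {gen i | i. i < n})"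
  proof
    fix x assume "x \<in> symm q ` {commt t | t. set (leaves t) \<subseteq> {..<n}}"
    then obtain t where t: "set (leaves t) \<subseteq> {..<n}" "x = symm q (commt t)" by auto
    show "x \<in> lspan (symm q ` {gen i | i. i < n})"
    proof (cases t)
      case (Leaf i)
      then have "x \<in> symm q ` {gen i | i. i < n}" using t by auto
      then show ?thesis by (rule lspan_base)
    next
      case (Node s r)
      then have "x = tzero" using vanish[OF C] t by blast
      then show ?thesis by (simp add: lspan.lspan_zero)
    qed
  qed
  show ?thesis
    unfolding NicholsL_def NicholsLminus_def NicholsV_def symm_image_lspan
    using lspan_eq[OF Bsub G] lspan_eq[OF Csub G2] by simp
qed

theorem proposition6p3:
  fixes q :: "nat \<Rightarrow> nat \<Rightarrow> 'a::field_char_0" and n :: nat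
  assumes "alg_closed TYPE('a)"
    and "\<forall>i<n. \<forall>j<n. q i j \<noteq> 0"
  shows "(NicholsL q n = NicholsLminus q n \<longleftrightarrow>
           ((\<forall>i<n. (q i i)^2 = 1) \<and> (\<forall>i<n. \<forall>j<n. i \<noteq> j \<longrightarrow> q i j = 1 \<and> q j i = 1)))
       \<and> (NicholsL q n = NicholsLminus q n \<longrightarrow>
           NicholsL q n = NicholsV q n \<and> NicholsLminus q n = NicholsV q n)"
proof -
  have fw: "condq q n" if eq: "NicholsL q n = NicholsLminus q n"
  proof -
    have "(q i i)^2 = 1" if "i < n" for i
      using forward_pair[OF eq that that] by (simp add: power2_eq_square)
    moreover have "q i j = 1 \<and> q j i = 1" if "i < n" "j < n" "i \<noteq> j" for i j
      using forward_pair[OF eq that(1,2)] forward_pair[OF eq that(2,1)] that(3) by auto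
    ultimately show ?thesis unfolding condq_def by blast
  qed
  have bw: "NicholsL q n = NicholsV q n \<and> NicholsLminus q n = NicholsV q n" if "condq q n"
    using backward[OF that] .
  show ?thesis using fw bw unfolding condq_def by metis
qed


end
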